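(* If $x_i$ is an optimal mechanism for agent $i$ (maximizing $\mathbb E[x_i(s)]$ subject to (P) and (IC)) with indirect utility $U_i(s_i)=\mathbb E[\omega x_i(s_i,s_{-i})\mid s_i]$, then $U_i(s_i)\ge 2s_i-1$ for every type $s_i$.
   Context: Setup. A state $\omega\in\{-1,+1\}$ is drawn with probability $1/2$ each. There are $n\ge2$ agents. Conditional on $\omega$, signals are i.i.d. with distribution $\mathbb F_\omega$ on $[0,1]$, normalized so that $s_i=\mathbb P[\omega=+1\mid s_i]$; $\mathbb F_{-1},\mathbb F_{+1}$ mutually absolutely continuous with densities; $\mathbb F=(\mathbb F_{-1}+\mathbb F_{+1})/2$ has density supported on a non-singleton interval with endpoints $\underline s<\overline s$ in $[0,1]$, differentiable with continuous derivative and $|f'/f|$ bounded. A mechanism for agent $i$ is measurable $x_i:[\underline s,\overline s]^n\to[0,1]$ (probability of receiving a good worth $\omega$, else $0$). (P): $\mathbb E[\omega x_i(s_i,s_{-i})\mid s_i]\ge0$; (IC): $\mathbb E[\omega x_i(s_i,s_{-i})\mid s_i]\ge\mathbb E[\omega x_i(\hat s_i,s_{-i})\mid s_i]$, for all $s_i,\hat s_i$ in the support. *)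

theory Defs
  imports "HOL-Probability.Probability"
begin

definition sig_dist :: "(real \<Rightarrow> real) \<Rightarrow> real \<Rightarrow> real \<Rightarrow> real measure" where
  "sig_dist g a b = density lborel (\<lambda>t. ennreal (indicator {a..b} t * g t))"

text \<open>E[x_i(t, s_{-i}) | omega], where s_{-i} are i.i.d. with density g (the conditional
  density of a signal given omega).\<close>
definition cond_alloc ::
  "nat \<Rightarrow> (real \<Rightarrow> real) \<Rightarrow> real \<Rightarrow> real \<Rightarrow> ((nat \<Rightarrow> real) \<Rightarrow> real) \<Rightarrow> nat \<Rightarrow> real \<Rightarrow> real" where
  "cond_alloc n g a b x i t = (\<integral>s. x (s(i := t)) \<partial>(PiM ({..<n} - {i}) (\<lambda>_. sig_dist g a b)))"

text \<open>E[omega x_i(r, s_{-i}) | s_i = t]: the true type is t (so P[omega=+1|s_i=t] = t),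
  the report is r.  fm, fp are the densities of F_{-1}, F_{+1}.\<close>
definition report_util ::
  "nat \<Rightarrow> (real \<Rightarrow> real) \<Rightarrow> (real \<Rightarrow> real) \<Rightarrow> real \<Rightarrow> real \<Rightarrow> ((nat \<Rightarrow> real) \<Rightarrow> real)
   \<Rightarrow> nat \<Rightarrow> real \<Rightarrow> real \<Rightarrow> real" where
  "report_util n fm fp a b x i t r =
     t * cond_alloc n fp a b x i r - (1 - t) * cond_alloc n fm a b x i r"

definition indirect_util ::
  "nat \<Rightarrow> (real \<Rightarrow> real) \<Rightarrow> (real \<Rightarrow> real) \<Rightarrow> real \<Rightarrow> real \<Rightarrow> ((nat \<Rightarrow> real) \<Rightarrow> real)
   \<Rightarrow> nat \<Rightarrow> real \<Rightarrow> real" where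
  "indirect_util n fm fp a b x i t = report_util n fm fp a b x i t t"

text \<open>Objective E[x_i(s)] (state is +1 or -1 with probability 1/2 each).\<close>
definition objective ::
  "nat \<Rightarrow> (real \<Rightarrow> real) \<Rightarrow> (real \<Rightarrow> real) \<Rightarrow> real \<Rightarrow> real \<Rightarrow> ((nat \<Rightarrow> real) \<Rightarrow> real) \<Rightarrow> real" where
  "objective n fm fp a b x =
     (1/2) * (\<integral>s. x s \<partial>(PiM {..<n} (\<lambda>_. sig_dist fp a b)))
   + (1/2) * (\<integral>s. x s \<partial>(PiM {..<n} (\<lambda>_. sig_dist fm a b)))"

definition mechanism :: "nat \<Rightarrow> ((nat \<Rightarrow> real) \<Rightarrow> real) \<Rightarrow> bool" where
  "mechanism n x \<longleftrightarrow> x \<in> borel_measurable (PiM {..<n} (\<lambda>_. lborel)) \<and> (\<forall>s. 0 \<le> x s \<and> x s \<le> 1)"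

definition feasible ::
  "nat \<Rightarrow> (real \<Rightarrow> real) \<Rightarrow> (real \<Rightarrow> real) \<Rightarrow> real \<Rightarrow> real \<Rightarrow> ((nat \<Rightarrow> real) \<Rightarrow> real) \<Rightarrow> nat \<Rightarrow> bool" where
  "feasible n fm fp a b x i \<longleftrightarrow>
     (\<forall>t\<in>{a..b}. indirect_util n fm fp a b x i t \<ge> 0) \<and>
     (\<forall>t\<in>{a..b}. \<forall>r\<in>{a..b}. indirect_util n fm fp a b x i t \<ge> report_util n fm fp a b x i t r)"

definition optimal ::
  "nat \<Rightarrow> (real \<Rightarrow> real) \<Rightarrow> (real \<Rightarrow> real) \<Rightarrow> real \<Rightarrow> real \<Rightarrow> ((nat \<Rightarrow> real) \<Rightarrow> real) \<Rightarrow> nat \<Rightarrow> bool" where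
  "optimal n fm fp a b x i \<longleftrightarrow>
     mechanism n x \<and> feasible n fm fp a b x i \<and>
     (\<forall>y. mechanism n y \<and> feasible n fm fp a b y i \<longrightarrow> objective n fm fp a b y \<le> objective n fm fp a b x)"

end

theory Submission
  imports Defs
begin

lemma sig_sets: "sets (sig_dist g a b) = sets lborel"
  by (simp add: sig_dist_def)

lemma sig_prob:
  assumes nn: "\<forall>t\<in>{a..b}. 0 \<le> g t" and int: "set_integrable lborel {a..b} g"
    and one: "(LINT t:{a..b}|lborel. g t) = 1"
  shows "prob_space (sig_dist g a b)"
proof
  have m: "(\<lambda>t. indicator {a..b} t * g t) \<in> borel_measurable lborel"
    using int unfolding set_integrable_def by (simp add: borel_measurable_integrable)
  have "emeasure (sig_dist g a b) (space (sig_dist g a b)) = (\<integral>\<^sup>+t. ennreal (indicator {a..b} t * g t) \<partial>lborel)"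
    unfolding sig_dist_def using m by (simp add: emeasure_density)
  also have "\<dots> = ennreal (\<integral> t. indicator {a..b} t * g t \<partial>lborel)"
    apply (rule nn_integral_eq_integral)
    using int nn unfolding set_integrable_def by (auto simp: indicator_def)
  also have "\<dots> = 1" using one unfolding set_lebesgue_integral_def by simp
  finally show "emeasure (sig_dist g a b) (space (sig_dist g a b)) = 1" .
qed

lemma meas_sig:
  assumes "x \<in> borel_measurable (PiM K (\<lambda>_. lborel))"
  shows "x \<in> borel_measurable (PiM K (\<lambda>_. sig_dist g a b))"
proof -
  have e: "sets (PiM K (\<lambda>_. sig_dist g a b)) = sets (PiM K (\<lambda>_. lborel))"
    by (rule sets_PiM_cong) (auto simp: sig_sets)
  then show ?thesis by (subst measurable_cong_sets[OF e refl]) (rule assms)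
qed

lemma meas_upd:
  assumes "x \<in> borel_measurable (PiM (insert i I) (\<lambda>_. lborel))"
  shows "(\<lambda>s. x (s(i:=t))) \<in> borel_measurable (PiM I (\<lambda>_. sig_dist g a b))"
proof -
  have "(\<lambda>s. s(i:=t)) \<in> measurable (PiM I (\<lambda>_. sig_dist g a b)) (PiM (insert i I) (\<lambda>_. sig_dist g a b))"
    by (rule measurable_fun_upd[where J=I]) (auto simp: sig_dist_def)
  then show ?thesis using meas_sig[OF assms] by (rule measurable_compose)
qed

lemma ca_integrable:
  assumes pr: "prob_space (sig_dist g a b)" and m: "mechanism n x" and i: "i < n"
  shows "integrable (PiM ({..<n} - {i}) (\<lambda>_. sig_dist g a b)) (\<lambda>s. x (s(i:=t)))"
proof -
  interpret P: prob_space "PiM ({..<n} - {i}) (\<lambda>_. sig_dist g a b)"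
    by (rule prob_space_PiM) (rule pr)
  have ins: "insert i ({..<n} - {i}) = {..<n}" using i by auto
  have xm: "x \<in> borel_measurable (PiM (insert i ({..<n} - {i})) (\<lambda>_. lborel))"
    using m unfolding mechanism_def ins by simp
  show ?thesis
    apply (rule P.integrable_const_bound[where B=1])
    using m unfolding mechanism_def apply simp
    by (rule meas_upd[OF xm])
qed

lemma ca_bounds:
  assumes pr: "prob_space (sig_dist g a b)" and m: "mechanism n x" and i: "i < n"
  shows "0 \<le> cond_alloc n g a b x i r" "cond_alloc n g a b x i r \<le> 1"
proof -
  interpret P: prob_space "PiM ({..<n} - {i}) (\<lambda>_. sig_dist g a b)"
    by (rule prob_space_PiM) (rule pr)
  have int: "integrable (PiM ({..<n} - {i}) (\<lambda>_. sig_dist g a b)) (\<lambda>s. x (s(i:=r)))"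
    by (rule ca_integrable[OF assms])
  show "0 \<le> cond_alloc n g a b x i r" unfolding cond_alloc_def
    using m unfolding mechanism_def by (simp add: integral_nonneg)
  have "cond_alloc n g a b x i r \<le> (\<integral>s. 1 \<partial>(PiM ({..<n} - {i}) (\<lambda>_. sig_dist g a b)))"
    unfolding cond_alloc_def
    apply (rule integral_mono[OF int])
    using m unfolding mechanism_def by auto
  then show "cond_alloc n g a b x i r \<le> 1" by (simp add: P.prob_space)
qed

lemma ca_upd:
  assumes pr: "prob_space (sig_dist g a b)"
  shows "cond_alloc n g a b (\<lambda>s. if s i \<in> S then 1 else x s) i r = (if r \<in> S then 1 else cond_alloc n g a b x i r)"
proof -
  interpret P: prob_space "PiM ({..<n} - {i}) (\<lambda>_. sig_dist g a b)"
    by (rule prob_space_PiM) (rule pr)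
  show ?thesis unfolding cond_alloc_def by (simp add: P.prob_space)
qed

theorem lemmaA3:
  fixes n i :: nat and a b :: real and fm fp f f' :: "real \<Rightarrow> real" and x :: "(nat \<Rightarrow> real) \<Rightarrow> real"
  assumes n: "n \<ge> 2" and i: "i < n"
    and ab: "0 \<le> a" "a < b" "b \<le> 1"
    and fm_nn: "\<forall>t\<in>{a..b}. 0 \<le> fm t" and fp_nn: "\<forall>t\<in>{a..b}. 0 \<le> fp t"
    and fm_int: "set_integrable lborel {a..b} fm" and fp_int: "set_integrable lborel {a..b} fp"
    and fm_one: "(LINT t:{a..b}|lborel. fm t) = 1" and fp_one: "(LINT t:{a..b}|lborel. fp t) = 1"
    and normalized: "\<forall>t\<in>{a..b}. fp t = t * (fp t + fm t)"
    and f_def: "\<forall>t. f t = (fm t + fp t) / 2"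
    and f_pos: "\<forall>t\<in>{a<..<b}. 0 < f t"
    and f_deriv: "\<forall>t\<in>{a<..<b}. (f has_real_derivative f' t) (at t)"
    and f'_cont: "continuous_on {a<..<b} f'"
    and f'_bdd: "\<exists>B. \<forall>t\<in>{a<..<b}. \<bar>f' t / f t\<bar> \<le> B"
    and opt: "optimal n fm fp a b x i"
  shows "\<forall>t\<in>{a..b}. indirect_util n fm fp a b x i t \<ge> 2 * t - 1"
proof (rule ccontr)
  assume "\<not> ?thesis"
  then obtain t0 where t0: "t0 \<in> {a..b}" and bad: "indirect_util n fm fp a b x i t0 < 2*t0 - 1"
    by auto
  define I where "I = {..<n} - {i}"
  have Iins: "insert i I = {..<n}" and iI: "i \<notin> I" and fI: "finite I" using i by (auto simp: I_def)
  define Qp where "Qp = cond_alloc n fp a b x i"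
  define Qm where "Qm = cond_alloc n fm a b x i"
  define U where "U = indirect_util n fm fp a b x i"
  have RU: "\<And>t r. report_util n fm fp a b x i t r = t * Qp r - (1-t) * Qm r"
    by (simp add: report_util_def Qp_def Qm_def)
  have UU: "\<And>t. U t = t * Qp t - (1-t)*Qm t" by (simp add: U_def indirect_util_def RU)
  from opt have mech: "mechanism n x" and feas: "feasible n fm fp a b x i"
    and best: "\<And>y. mechanism n y \<Longrightarrow> feasible n fm fp a b y i \<Longrightarrow> objective n fm fp a b y \<le> objective n fm fp a b x"
    unfolding optimal_def by auto
  have P: "\<And>t. t \<in> {a..b} \<Longrightarrow> 0 \<le> U t"
    using feas unfolding feasible_def U_def by auto
  have IC: "\<And>t r. t\<in>{a..b} \<Longrightarrow> r\<in>{a..b} \<Longrightarrow> t * Qp r - (1-t)*Qm r \<le> U t"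
    using feas unfolding feasible_def U_def[symmetric] RU by auto
  have xmeas: "x \<in> borel_measurable (PiM {..<n} (\<lambda>_. lborel))" and x01: "\<And>s. 0 \<le> x s" "\<And>s. x s \<le> 1"
    using mech unfolding mechanism_def by auto
  have probp: "prob_space (sig_dist fp a b)" by (rule sig_prob[OF fp_nn fp_int fp_one])
  have probm: "prob_space (sig_dist fm a b)" by (rule sig_prob[OF fm_nn fm_int fm_one])
  have Qb: "\<And>r. 0 \<le> Qp r" "\<And>r. Qp r \<le> 1" "\<And>r. 0 \<le> Qm r" "\<And>r. Qm r \<le> 1"
    unfolding Qp_def Qm_def using ca_bounds[OF probp mech i] ca_bounds[OF probm mech i] by auto
  define S where "S = {t\<in>{a..b}. U t < 2*t - 1}"
  have Sint: "is_interval S"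
    unfolding is_interval_1
  proof (intro ballI allI impI)
    fix t1 t2 t assume t1: "t1 \<in> S" and t2: "t2 \<in> S" and tt: "t1 \<le> t \<and> t \<le> t2"
    have tab: "t \<in> {a..b}" using t1 t2 tt by (auto simp: S_def)
    show "t \<in> S"
    proof (cases "t1 = t2")
      case True then show ?thesis using t1 tt by auto
    next
      case False
      then have lt: "t1 < t2" using tt by auto
      have i1: "t1 * Qp t - (1-t1)*Qm t \<le> U t1" using IC[of t1 t] t1 tab by (auto simp: S_def)
      have i2: "t2 * Qp t - (1-t2)*Qm t \<le> U t2" using IC[of t2 t] t2 tab by (auto simp: S_def)
      have s1: "U t1 < 2*t1 - 1" and s2: "U t2 < 2*t2 - 1" using t1 t2 by (auto simp: S_def)
      have e1: "(t2-t)*(t1 * Qp t - (1-t1)*Qm t) \<le> (t2-t)*U t1" using i1 tt by (intro mult_left_mono) auto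
      have e2: "(t-t1)*(t2 * Qp t - (1-t2)*Qm t) \<le> (t-t1)*U t2" using i2 tt by (intro mult_left_mono) auto
      have e3: "(t2-t)*U t1 + (t-t1)*U t2 < (t2-t)*(2*t1-1) + (t-t1)*(2*t2-1)"
      proof (cases "t < t2")
        case True
        have "(t2-t)*U t1 < (t2-t)*(2*t1-1)" using True s1 by (intro mult_strict_left_mono) auto
        moreover have "(t-t1)*U t2 \<le> (t-t1)*(2*t2-1)" using tt s2 by (intro mult_left_mono) auto
        ultimately show ?thesis by linarith
      next
        case False
        then have "t = t2" using tt by auto
        then show ?thesis using lt s2 by (intro add_le_less_mono mult_strict_left_mono) auto
      qed
      have id1: "(t2-t)*(t1 * Qp t - (1-t1)*Qm t) + (t-t1)*(t2 * Qp t - (1-t2)*Qm t) = (t2-t1)*U t"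
        unfolding UU by (simp add: algebra_simps)
      have id2: "(t2-t)*(2*t1-1) + (t-t1)*(2*t2-1) = (t2-t1)*(2*t-1)"
        by (simp add: algebra_simps)
      have "(t2-t1)*U t < (t2-t1)*(2*t-1)" using e1 e2 e3 id1 id2 by linarith
      then have "U t < 2*t-1" using lt by (simp add: mult_less_cancel_left)
      then show ?thesis using tab by (auto simp: S_def)
    qed
  qed
  have Sb[measurable]: "S \<in> sets borel" by (rule real_interval_borel_measurable[OF Sint])
  define y where "y = (\<lambda>s::nat\<Rightarrow>real. if s i \<in> S then 1 else x s)"
  have ymeas: "y \<in> borel_measurable (PiM {..<n} (\<lambda>_. lborel))"
    unfolding y_def using xmeas apply measurable using i by simp
  have ymech: "mechanism n y" unfolding mechanism_def using ymeas x01 by (auto simp: y_def)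
  have RUy: "\<And>t r. report_util n fm fp a b y i t r = (if r \<in> S then 2*t-1 else t * Qp r - (1-t) * Qm r)"
    unfolding report_util_def y_def ca_upd[OF probp] ca_upd[OF probm] Qp_def Qm_def by auto
  have yfeas: "feasible n fm fp a b y i"
    unfolding feasible_def indirect_util_def RUy
  proof (intro conjI ballI)
    fix t assume t: "t \<in> {a..b}"
    show "0 \<le> (if t \<in> S then 2*t-1 else t * Qp t - (1-t) * Qm t)"
      using P[OF t] UU[of t] by (auto simp: S_def)
  next
    fix t r assume t: "t \<in> {a..b}" and r: "r \<in> {a..b}"
    show "(if r \<in> S then 2*t-1 else t * Qp r - (1-t) * Qm r) \<le> (if t \<in> S then 2*t-1 else t * Qp t - (1-t) * Qm t)"
      using IC[OF t r] UU[of t] t by (auto simp: S_def)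
  qed
  have objle: "objective n fm fp a b y \<le> objective n fm fp a b x" by (rule best[OF ymech yfeas])
  define Pp where "Pp = PiM {..<n} (\<lambda>_. sig_dist fp a b)"
  define Pm where "Pm = PiM {..<n} (\<lambda>_. sig_dist fm a b)"
  interpret pp: prob_space Pp unfolding Pp_def by (rule prob_space_PiM) (rule probp)
  interpret pm: prob_space Pm unfolding Pm_def by (rule prob_space_PiM) (rule probm)
  have xmp: "x \<in> borel_measurable Pp" unfolding Pp_def by (rule meas_sig[OF xmeas])
  have ymp: "y \<in> borel_measurable Pp" unfolding Pp_def by (rule meas_sig[OF ymeas])
  have xmm: "x \<in> borel_measurable Pm" unfolding Pm_def by (rule meas_sig[OF xmeas])
  have ymm: "y \<in> borel_measurable Pm" unfolding Pm_def by (rule meas_sig[OF ymeas])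
  have y01: "\<And>s. 0 \<le> y s" "\<And>s. y s \<le> 1" and xy: "\<And>s. x s \<le> y s" using x01 by (auto simp: y_def)
  have intxp: "integrable Pp x" by (rule pp.integrable_const_bound[where B=1]) (use x01 xmp in auto)
  have intyp: "integrable Pp y" by (rule pp.integrable_const_bound[where B=1]) (use y01 ymp in auto)
  have intxm: "integrable Pm x" by (rule pm.integrable_const_bound[where B=1]) (use x01 xmm in auto)
  have intym: "integrable Pm y" by (rule pm.integrable_const_bound[where B=1]) (use y01 ymm in auto)
  have monom: "(\<integral>s. x s \<partial>Pm) \<le> (\<integral>s. y s \<partial>Pm)" by (rule integral_mono[OF intxm intym]) (use xy in auto)
  have strict: "(\<integral>s. x s \<partial>Pp) < (\<integral>s. y s \<partial>Pp)"
  proof -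
    define D0 where "D0 = 2*t0 - 1 - U t0"
    have D0: "0 < D0" using bad by (simp add: D0_def U_def)
    define l where "l = max a (t0 - D0/8)"
    define u where "u = min b (t0 + D0/8)"
    have lu: "l < u" using t0 D0 ab by (auto simp: l_def u_def)
    define J where "J = {l<..<u}"
    have Jprop: "t \<in> {a<..<b} \<and> t \<in> S \<and> D0/2 \<le> 1 - Qp t" if tJ: "t \<in> J" for t
    proof -
      from tJ have tab: "t \<in> {a<..<b}" and near: "\<bar>t - t0\<bar> < D0/8" by (auto simp: J_def l_def u_def split: abs_split)
      have i0: "t0 * Qp t - (1-t0)*Qm t \<le> U t0" using IC[OF t0] tab by auto
      have "U t - U t0 \<le> (t - t0)*(Qp t + Qm t)" using i0 UU[of t] by (simp add: algebra_simps)
      also have "\<dots> \<le> \<bar>t - t0\<bar> * (Qp t + Qm t)" using Qb by (intro mult_right_mono) auto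
      also have "\<dots> \<le> \<bar>t - t0\<bar> * 2" using Qb(2)[of t] Qb(4)[of t] by (intro mult_left_mono) auto
      finally have Dt: "D0/2 < 2*t - 1 - U t" using near abs_ge_minus_self[of "t - t0"] unfolding D0_def by argo
      have e: "2*t - 1 - U t = t*(1 - Qp t) - (1-t)*(1 - Qm t)" unfolding UU by (simp add: algebra_simps)
      have "0 \<le> (1-t)*(1 - Qm t)" using tab ab Qb by auto
      moreover have "(1-Qp t) * t \<le> 1 - Qp t" using tab ab Qb by (intro mult_left_le) auto
      ultimately have "D0/2 \<le> 1 - Qp t" using Dt e by (simp add: mult.commute)
      moreover have "t \<in> S" using Dt D0 tab by (auto simp: S_def)
      ultimately show ?thesis using tab by auto
    qed
    have fppos: "0 < fp t" if "t \<in> {a<..<b}" for t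
    proof -
      have h1: "fp t = t * (fp t + fm t)" using normalized that by auto
      have h2: "fp t + fm t = 2 * f t" using f_def[rule_format, of t] by simp
      have "fp t = t * (2 * f t)" using h1 h2 by simp
      then show ?thesis using f_pos that ab by auto
    qed
    have intd: "integrable Pp (\<lambda>s. y s - x s)" using intyp intxp by auto
    have E1: "ennreal (\<integral>s. y s - x s \<partial>Pp) = (\<integral>\<^sup>+ s. ennreal (y s - x s) \<partial>Pp)"
      by (rule nn_integral_eq_integral[symmetric]) (use intd xy in auto)
    interpret ps: product_sigma_finite "\<lambda>_::nat. sig_dist fp a b"
      unfolding product_sigma_finite_def using prob_space_imp_sigma_finite[OF probp] by auto
    have dm: "(\<lambda>s. ennreal (y s - x s)) \<in> borel_measurable (PiM (insert i I) (\<lambda>_. sig_dist fp a b))"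
      using ymp xmp unfolding Pp_def Iins[symmetric] by measurable
    have E2: "(\<integral>\<^sup>+ s. ennreal (y s - x s) \<partial>Pp) = (\<integral>\<^sup>+ t. (\<integral>\<^sup>+ s. ennreal (y (s(i:=t)) - x (s(i:=t))) \<partial>PiM I (\<lambda>_. sig_dist fp a b)) \<partial>sig_dist fp a b)"
      unfolding Pp_def Iins[symmetric] by (rule ps.product_nn_integral_insert_rev[OF fI iI dm])
    have E3: "(\<integral>\<^sup>+ t. ennreal (indicator J t * (D0/2)) \<partial>sig_dist fp a b) \<le> (\<integral>\<^sup>+ t. (\<integral>\<^sup>+ s. ennreal (y (s(i:=t)) - x (s(i:=t))) \<partial>PiM I (\<lambda>_. sig_dist fp a b)) \<partial>sig_dist fp a b)"
    proof (rule nn_integral_mono)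
      fix t
      show "ennreal (indicator J t * (D0/2)) \<le> (\<integral>\<^sup>+ s. ennreal (y (s(i:=t)) - x (s(i:=t))) \<partial>PiM I (\<lambda>_. sig_dist fp a b))"
      proof (cases "t \<in> J")
        case False then show ?thesis by simp
      next
        case True
        then have tS: "t \<in> S" and Qt: "D0/2 \<le> 1 - Qp t" using Jprop by auto
        interpret pI: prob_space "PiM I (\<lambda>_. sig_dist fp a b)" by (rule prob_space_PiM) (rule probp)
        have intI: "integrable (PiM I (\<lambda>_. sig_dist fp a b)) (\<lambda>s. x (s(i:=t)))"
          using ca_integrable[OF probp mech i] unfolding I_def by blast
        have "(\<integral>\<^sup>+ s. ennreal (y (s(i:=t)) - x (s(i:=t))) \<partial>PiM I (\<lambda>_. sig_dist fp a b)) = (\<integral>\<^sup>+ s. ennreal (1 - x (s(i:=t))) \<partial>PiM I (\<lambda>_. sig_dist fp a b))"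
          using tS by (simp add: y_def)
        also have "\<dots> = ennreal (\<integral> s. 1 - x (s(i:=t)) \<partial>PiM I (\<lambda>_. sig_dist fp a b))"
          by (rule nn_integral_eq_integral) (use intI x01 in auto)
        also have "(\<integral> s. 1 - x (s(i:=t)) \<partial>PiM I (\<lambda>_. sig_dist fp a b)) = 1 - Qp t"
proof -
          have "(\<integral> s. 1 - x (s(i:=t)) \<partial>PiM I (\<lambda>_. sig_dist fp a b)) = 1 - (\<integral> s. x (s(i:=t)) \<partial>PiM I (\<lambda>_. sig_dist fp a b))"
            using intI by (simp add: pI.prob_space pI.integrable_const)
          then show ?thesis by (simp add: Qp_def cond_alloc_def I_def)
        qed
        finally have eqI: "(\<integral>\<^sup>+ s. ennreal (y (s(i:=t)) - x (s(i:=t))) \<partial>PiM I (\<lambda>_. sig_dist fp a b)) = ennreal (1 - Qp t)" .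
        show ?thesis unfolding eqI using True Qt by (intro ennreal_leI) simp
      qed
    qed
    have fpm: "(\<lambda>t. indicator {a..b} t * fp t) \<in> borel_measurable lborel"
      using fp_int unfolding set_integrable_def by (simp add: borel_measurable_integrable)
    have E4: "(\<integral>\<^sup>+ t. ennreal (indicator J t * (D0/2)) \<partial>sig_dist fp a b) = (\<integral>\<^sup>+ t. ennreal (indicator {a..b} t * fp t) * ennreal (indicator J t * (D0/2)) \<partial>lborel)"
      unfolding sig_dist_def J_def by (rule nn_integral_density) (use fpm in auto)
    have E5: "(\<integral>\<^sup>+ t. ennreal (indicator {a..b} t * fp t) * ennreal (indicator J t * (D0/2)) \<partial>lborel) \<noteq> 0"
    proof
      assume "(\<integral>\<^sup>+ t. ennreal (indicator {a..b} t * fp t) * ennreal (indicator J t * (D0/2)) \<partial>lborel) = 0"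
      then have "AE t in lborel. ennreal (indicator {a..b} t * fp t) * ennreal (indicator J t * (D0/2)) = 0"
        by (subst (asm) nn_integral_0_iff_AE) (use fpm in \<open>auto simp: J_def\<close>)
      then have "AE t in lborel. t \<notin> J"
      proof (rule eventually_mono)
        fix t assume h: "ennreal (indicator {a..b} t * fp t) * ennreal (indicator J t * (D0/2)) = 0"
        show "t \<notin> J"
        proof
          assume tJ: "t \<in> J"
          then have "t \<in> {a<..<b}" using Jprop by auto
          then have "0 < indicator {a..b} t * fp t" using fppos by auto
          moreover have "0 < indicator J t * (D0/2)" using tJ D0 by auto
          ultimately show False using h by (simp add: ennreal_eq_0_iff)
        qed
      qed
      then have "emeasure lborel J = 0" by (subst (asm) AE_iff_measurable[of J]) (auto simp: J_def)
      moreover have "emeasure lborel J = ennreal (u - l)" using lu by (simp add: J_def)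
      ultimately show False using lu by simp
    qed
    have "0 < (\<integral>\<^sup>+ t. ennreal (indicator J t * (D0/2)) \<partial>sig_dist fp a b)"
      using E4 E5 by (simp add: zero_less_iff_neq_zero)
    also note E3
    also note E2[symmetric]
    also note E1[symmetric]
    finally have "0 < (\<integral>s. y s - x s \<partial>Pp)" by simp
    then show ?thesis using intxp intyp by simp
  qed
  have "objective n fm fp a b x < objective n fm fp a b y"
    unfolding objective_def Pp_def[symmetric] Pm_def[symmetric] using monom strict by linarith
  then show False using objle by linarith
qed

end
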